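(* Let $P\subseteq\mathbb{R}^n$ be an $n$-dimensional rational polytope and let $s\ge 0$. (1) Each facet of $P^{(s)}$ is of the form $F^{(s)}:=\{x\in P^{(s)}: d_F(x)=s\}$ for some facet $F$ of $P$. (2) Assume $P^{(s)}$ has dimension $n$ and let $x\in P^{(s)}$. Then $d_{P^{(s)}}(x)=d_P(x)-s$. Moreover, if $x\in\mathrm{int}(P^{(s)})$ and $d_P(x)=d_F(x)$ for a facet $F$ of $P$, then $F^{(s)}$ is a facet of $P^{(s)}$ and $d_{P^{(s)}}(x)=d_{F^{(s)}}(x)$. (3) Assume $P^{(s)}$ has dimension $n$ and let $r\ge 0$. Then $(P^{(s)})^{(r)}=P^{(s+r)}$. (4) For $r>0$ we have $r\,(P^{(s)})=(rP)^{(rs)}$.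
   Context: Any $n$-dimensional rational polytope $Q\subseteq\mathbb{R}^n$ has a unique irredundant description $Q=\{x:\langle a_i,x\rangle\ge b_i,\ i=1,\dots,m\}$ with primitive $a_i\in(\mathbb{Z}^n)^*$, $b_i\in\mathbb{Q}$, where each inequality defines a facet $F_i$ of $Q$. The lattice distance from $F_i$ is $d_{F_i}(x):=\langle a_i,x\rangle-b_i$, and $d_Q(x):=\min_i d_{F_i}(x)$. For $s\ge0$, the adjoint polytope is $Q^{(s)}:=\{x\in\mathbb{R}^n:d_Q(x)\ge s\}$. When $P^{(s)}$ is $n$-dimensional, $d_{P^{(s)}}$ is computed from its own irredundant facet description, and for a facet $F^{(s)}$ of $P^{(s)}$ coming from the facet $F=\{\langle a,x\rangle=b\}$ of $P$, $d_{F^{(s)}}(x)=\langle a,x\rangle-b-s$. *)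

theory Defs
  imports "HOL-Analysis.Analysis"
begin

definition rational_polytope :: "(real ^ 'n) set \<Rightarrow> bool" where
  "rational_polytope P \<longleftrightarrow>
     (\<exists>V. finite V \<and> P = convex hull V \<and> (\<forall>v\<in>V. \<forall>i. v $ i \<in> \<rat>))"

definition primitive_vec :: "real ^ 'n \<Rightarrow> bool" where
  "primitive_vec a \<longleftrightarrow> (\<forall>i. a $ i \<in> \<int>) \<and> a \<noteq> 0 \<and>
     (\<forall>k::int. k > 1 \<longrightarrow> \<not> (\<forall>i. a $ i / of_int k \<in> \<int>))"

definition facet_ineq :: "(real ^ 'n) set \<Rightarrow> (real ^ 'n) set \<Rightarrow> real ^ 'n \<Rightarrow> real \<Rightarrow> bool" where
  "facet_ineq Q F a b \<longleftrightarrow> primitive_vec a \<and> (\<forall>x\<in>Q. b \<le> a \<bullet> x) \<and> F = {x\<in>Q. a \<bullet> x = b}"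

text \<open>Lattice distance \<open>d_F(x) = <a,x> - b\<close> from the facet F of Q (unique primitive description).\<close>
definition facet_dist :: "(real ^ 'n) set \<Rightarrow> (real ^ 'n) set \<Rightarrow> real ^ 'n \<Rightarrow> real" where
  "facet_dist Q F x = (let (a, b) = (THE (a, b). facet_ineq Q F a b) in a \<bullet> x - b)"

definition lat_dist :: "(real ^ 'n) set \<Rightarrow> real ^ 'n \<Rightarrow> real" where
  "lat_dist Q x = Min ((\<lambda>F. facet_dist Q F x) ` {F. F facet_of Q})"

definition adjoint_poly :: "(real ^ 'n) set \<Rightarrow> real \<Rightarrow> (real ^ 'n) set" where
  "adjoint_poly Q s = {x. s \<le> lat_dist Q x}"

definition adj_facet :: "(real ^ 'n) set \<Rightarrow> (real ^ 'n) set \<Rightarrow> real \<Rightarrow> (real ^ 'n) set" where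
  "adj_facet P F s = {x \<in> adjoint_poly P s. facet_dist P F x = s}"

end

theory Submission
  imports Defs
begin



lemma rat_normal:
  fixes T :: "(real^'n) set"
  assumes fin: "finite T" and rat: "\<forall>v\<in>T. \<forall>i. v$i \<in> \<rat>"
    and dimT: "aff_dim T = int CARD('n) - 1" and w0: "w0 \<in> T"
  shows "\<exists>c. c \<noteq> 0 \<and> (\<forall>i. c$i \<in> \<rat>) \<and> (\<forall>w\<in>T. c \<bullet> (w - w0) = 0)"
proof -
  define D where "D = (\<lambda>w. w - w0) ` T"
  have "w0 \<in> affine hull T" using w0 by (simp add: hull_inc)
  then have "aff_dim T = int (dim D)" unfolding D_def by (rule aff_dim_eq_dim_subtract)
  then have dimD: "dim D = CARD('n) - 1" using dimT by simp
  obtain B where BD: "B \<subseteq> D" and indB: "independent B" and DB: "D \<subseteq> span B" and cardB: "card B = dim D"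
    using basis_exists by blast
  have finB: "finite B" using indB by (simp add: independent_imp_finite)
  have ratD: "\<forall>v\<in>D. \<forall>i. v$i \<in> \<rat>" unfolding D_def using rat w0 by auto
  obtain k0 :: 'n where True by simp
  have "card (UNIV - {k0}) = card B" using cardB dimD by (simp add: card_Diff_singleton)
  then obtain g where g: "bij_betw g (UNIV - {k0}) B"
    using finite_same_card_bij[of "UNIV - {k0}" B] finB by auto
  define M :: "real^'n \<Rightarrow> real^'n^'n" where "M x = (\<chi> i. if i = k0 then x else g i)" for x
  define c where "c = (\<chi> j. det (M (axis j 1)))"
  have lin: "det (M x) = c \<bullet> x" for x
  proof -
    have "det (M x) = det ((\<chi> i. if i = k0 then sum (\<lambda>j. (x$j) *s axis j 1) UNIV else g i)::real^'n^'n)"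
      unfolding M_def basis_expansion ..
    also have "\<dots> = (\<Sum>j\<in>UNIV. det ((\<chi> i. if i = k0 then (x$j) *s axis j (1::real) else g i)::real^'n^'n))"
      by (rule det_linear_row_sum) simp
    also have "\<dots> = (\<Sum>j\<in>UNIV. x$j * c$j)"
      unfolding c_def M_def by (simp add: det_row_mul)
    also have "\<dots> = c \<bullet> x" by (simp add: inner_vec_def mult.commute)
    finally show ?thesis .
  qed
  have vanB: "c \<bullet> d = 0" if "d \<in> B" for d
  proof -
    have "d \<in> g ` (UNIV - {k0})" using g that by (simp add: bij_betw_def)
    then obtain k where k: "k \<in> UNIV - {k0}" "g k = d" by blast
    have "det (M d) = 0"
      by (rule det_identical_rows[of k0 k]) (use k in \<open>auto simp: M_def row_def\<close>)
    then show ?thesis using lin by simp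
  qed
  have vanS: "c \<bullet> d = 0" if "d \<in> span B" for d
  proof -
    have "span B \<subseteq> {x. c \<bullet> x = 0}"
      by (rule span_minimal) (use vanB subspace_hyperplane in auto)
    then show ?thesis using that by auto
  qed
  have ratc: "\<forall>j. c$j \<in> \<rat>"
  proof
    fix j
    have ent: "(M (axis j 1))$i$l \<in> \<rat>" for i l
    proof (cases "i = k0")
      case True then show ?thesis by (simp add: M_def axis_def)
    next
      case False
      then have "g i \<in> B" using g by (auto simp: bij_betw_def)
      then show ?thesis using False BD ratD by (auto simp: M_def)
    qed
    have "c$j = det (M (axis j 1))" unfolding c_def by simp
    then show "c$j \<in> \<rat>" unfolding det_def
      by (simp only:) (intro Rats_sum Rats_prod Rats_mult Rats_of_int ent)
  qed
  have "span B \<noteq> UNIV"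
  proof
    assume "span B = UNIV"
    then have "dim (span B) = CARD('n)" by simp
    moreover have "0 < CARD('n)" by simp
    moreover have "card B = CARD('n)" using \<open>dim (span B) = CARD('n)\<close> dim_eq_card_independent[OF indB] by simp
    ultimately show False using dimD cardB by linarith
  qed
  then obtain x0 where x0: "x0 \<notin> span B" by auto
  have rowsM: "rows (M x0) = insert x0 B"
  proof -
    have "rows (M x0) = {(if i = k0 then x0 else g i) | i. i \<in> UNIV}"
      unfolding rows_def row_def M_def vec_lambda_beta vec_lambda_eta ..
    also have "\<dots> = insert x0 (g ` (UNIV - {k0}))" by auto
    also have "\<dots> = insert x0 B" using g by (simp add: bij_betw_def)
    finally show ?thesis .
  qed
  have "x0 \<notin> B" using x0 span_base by blast
  have indI: "independent (insert x0 B)" using indB x0 by (rule independent_insertI[rotated])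
  have "card (insert x0 B) = CARD('n)" using \<open>x0 \<notin> B\<close> finB cardB dimD
    by simp
  then have "rank (M x0) = CARD('n)"
    unfolding row_rank_def rowsM dim_eq_card_independent[OF indI] .
  then have "det (M x0) \<noteq> 0" by (simp add: det_eq_0_rank)
  then have "c \<noteq> 0" using lin by auto
  moreover have "\<forall>w\<in>T. c \<bullet> (w - w0) = 0" using DB vanS unfolding D_def by auto
  ultimately show ?thesis using ratc by blast
qed



lemma ints_nonneg_nat: "(x::real) \<in> \<int> \<Longrightarrow> 0 \<le> x \<Longrightarrow> \<exists>m::nat. x = real m"
  by (metis Ints_cases of_int_0_le_iff of_nat_nat)

lemma ints_as_int: "(x::real) \<in> \<int> \<Longrightarrow> x = of_int \<lfloor>x\<rfloor>"
  by (metis Ints_cases floor_of_int)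

lemma primitive_scaling:
  fixes c :: "real^'n"
  assumes "c \<noteq> 0" and rat: "\<forall>i. c$i \<in> \<rat>"
  shows "\<exists>\<mu>>0. primitive_vec (\<mu> *\<^sub>R c)"
proof -
  have "\<exists>q::int. q > 0 \<and> of_int q * c$i \<in> \<int>" for i
  proof -
    obtain p q where "q > 0" "c$i = of_int p / of_int q" using Rats_cases'[OF rat[rule_format, of i]] by metis
    then show ?thesis by (intro exI[of _ q]) auto
  qed
  then obtain q where q: "\<And>i. q i > 0" "\<And>i. of_int (q i) * c$i \<in> \<int>" by metis
  define \<mu>0 where "\<mu>0 = (\<Prod>i\<in>UNIV. real_of_int (q i))"
  have mu0pos: "\<mu>0 > 0" unfolding \<mu>0_def using q(1) by (intro prod_pos) auto
  have mu0int: "\<mu>0 * c$i \<in> \<int>" for i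
  proof -
    have "\<mu>0 = real_of_int (q i) * (\<Prod>j\<in>UNIV-{i}. real_of_int (q j))"
      unfolding \<mu>0_def by (simp add: prod.remove)
    then have "\<mu>0 * c$i = (real_of_int (q i) * c$i) * (\<Prod>j\<in>UNIV-{i}. real_of_int (q j))" by simp
    also have "\<dots> \<in> \<int>" by (rule Ints_mult[OF q(2)[of i] Ints_prod]) auto
    finally show ?thesis .
  qed
  obtain i0 where i0: "c$i0 \<noteq> 0" using \<open>c \<noteq> 0\<close> by (metis vec_eq_iff zero_index)
  define N where "N = (\<lambda>m::nat. \<exists>\<mu>>0. (\<forall>i. \<mu> * c$i \<in> \<int>) \<and> \<bar>\<mu> * c$i0\<bar> = real m)"
  obtain m0 where "\<bar>\<mu>0 * c$i0\<bar> = real m0"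
    using ints_nonneg_nat[of "\<bar>\<mu>0 * c$i0\<bar>"] mu0int[of i0] by auto
  then have "N m0" unfolding N_def using mu0pos mu0int by blast
  then obtain m where Nm: "N m" and least: "\<And>m'. N m' \<Longrightarrow> m \<le> m'"
    using ex_has_least_nat[of N m0 id] by auto
  then obtain \<mu> where mu: "\<mu> > 0" "\<And>i. \<mu> * c$i \<in> \<int>" "\<bar>\<mu> * c$i0\<bar> = real m"
    unfolding N_def by blast
  have "\<mu> * c$i0 \<noteq> 0" using mu i0 by simp
  then have mpos: "real m > 0" using mu(3) by (metis zero_less_abs_iff)
  have "primitive_vec (\<mu> *\<^sub>R c)"
    unfolding primitive_vec_def
  proof (intro conjI allI impI)
    show "(\<mu> *\<^sub>R c) $ i \<in> \<int>" for i using mu by simp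
    show "\<mu> *\<^sub>R c \<noteq> 0" using mu \<open>c \<noteq> 0\<close> by simp
    fix k :: int assume k: "k > 1"
    show "\<not> (\<forall>i. (\<mu> *\<^sub>R c) $ i / of_int k \<in> \<int>)"
    proof
      assume all: "\<forall>i. (\<mu> *\<^sub>R c) $ i / of_int k \<in> \<int>"
      define \<mu>' where "\<mu>' = \<mu> / of_int k"
      have "\<mu>' > 0" unfolding \<mu>'_def using mu k by simp
      moreover have int': "\<mu>' * c$i \<in> \<int>" for i using all[rule_format, of i] unfolding \<mu>'_def by simp
      moreover obtain m' where m': "\<bar>\<mu>' * c$i0\<bar> = real m'"
        using ints_nonneg_nat[of "\<bar>\<mu>' * c$i0\<bar>"] int'[of i0] by auto
      ultimately have "N m'" unfolding N_def by blast
      then have "m \<le> m'" by (rule least)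
      moreover have "real m' = real m / of_int k"
        using m' mu(3) k unfolding \<mu>'_def by (simp add: abs_mult abs_divide)
      moreover have "real m / of_int k < real m" using mpos k by (simp add: divide_less_eq)
      ultimately show False by simp
    qed
  qed
  then show ?thesis using mu by blast
qed

lemma primitive_unique_scale:
  fixes a :: "real^'n"
  assumes pa: "primitive_vec a" and pa': "primitive_vec (\<mu> *\<^sub>R a)" and mu: "\<mu> > 0"
  shows "\<mu> = 1"
proof -
  have aint: "\<And>i. a$i \<in> \<int>" and "a \<noteq> 0" using pa by (auto simp: primitive_vec_def)
  have a'int: "\<And>i. \<mu> * a$i \<in> \<int>" using pa' by (auto simp: primitive_vec_def)
  obtain i0 where i0: "a$i0 \<noteq> 0" using \<open>a \<noteq> 0\<close> by (metis vec_eq_iff zero_index)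
  have "\<mu> = (\<mu> * a$i0) / a$i0" using i0 by simp
  also have "\<dots> \<in> \<rat>" using aint a'int by (meson Ints_subset_Rats Rats_divide subsetD)
  finally obtain p q where pq: "q > 0" "coprime p q" "\<mu> = of_int p / of_int q" by (rule Rats_cases')
  have ppos: "p > 0" using pq mu by (simp add: zero_less_divide_iff)
  define A where "A i = \<lfloor>a$i\<rfloor>" for i
  define A' where "A' i = \<lfloor>\<mu> * a$i\<rfloor>" for i
  have Aeq: "a$i = of_int (A i)" for i unfolding A_def by (rule ints_as_int[OF aint])
  have A'eq: "\<mu> * a$i = of_int (A' i)" for i unfolding A'_def by (rule ints_as_int[OF a'int])
  have rel: "q * A' i = p * A i" for i
  proof -
    have "real_of_int (q * A' i) = of_int q * (\<mu> * a$i)" using A'eq by simp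
    also have "\<dots> = of_int p * a$i" using pq by simp
    also have "\<dots> = real_of_int (p * A i)" using Aeq by simp
    finally show ?thesis by linarith
  qed
  have qdvd: "q dvd A i" for i
  proof -
    have "q dvd p * A i" using rel[of i] by (metis dvd_triv_left)
    moreover have "coprime q p" using pq by (simp add: coprime_commute)
    ultimately show ?thesis by (simp add: coprime_dvd_mult_right_iff)
  qed
  have "\<forall>i. a$i / of_int q \<in> \<int>"
  proof
    fix i
    obtain k where "A i = q * k" using qdvd[of i] by (rule dvdE)
    then show "a$i / of_int q \<in> \<int>" using Aeq[of i] pq(1) by simp
  qed
  then have q1: "q = 1" using pa pq unfolding primitive_vec_def by (metis int_one_le_iff_zero_less order_le_less)
  have "\<forall>i. (\<mu> *\<^sub>R a)$i / of_int p \<in> \<int>"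
    using pq q1 ppos aint by simp
  then have "p = 1" using pa' ppos unfolding primitive_vec_def by (metis int_one_le_iff_zero_less order_le_less)
  then show ?thesis using pq q1 by simp
qed

lemma hyp_eq:
  fixes a :: "real^'n"
  assumes "a \<noteq> 0" and eq: "{x. a \<bullet> x = b} = {x. a' \<bullet> x = b'}"
  shows "\<exists>\<mu>. a' = \<mu> *\<^sub>R a \<and> b' = \<mu> * b"
proof -
  define x0 where "x0 = (b / (a \<bullet> a)) *\<^sub>R a"
  have aa: "a \<bullet> a \<noteq> 0" using assms by simp
  have x0H: "a \<bullet> x0 = b" unfolding x0_def using aa by simp
  then have x0H': "a' \<bullet> x0 = b'" using eq by blast
  define \<mu> where "\<mu> = (a \<bullet> a') / (a \<bullet> a)"
  define v where "v = a' - \<mu> *\<^sub>R a"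
  have av: "a \<bullet> v = 0" unfolding v_def \<mu>_def using aa by (simp add: inner_diff_right)
  then have "a \<bullet> (x0 + v) = b" using x0H by (simp add: inner_add_right)
  then have "a' \<bullet> (x0 + v) = b'" using eq by blast
  then have a'v: "a' \<bullet> v = 0" using x0H' by (simp add: inner_add_right)
  have "v \<bullet> v = 0" unfolding v_def using a'v av unfolding v_def
    by (simp add: inner_diff_left inner_diff_right inner_commute)
  then have "v = 0" by simp
  then have a': "a' = \<mu> *\<^sub>R a" unfolding v_def by simp
  then have "b' = \<mu> * b" using x0H x0H' by simp
  then show ?thesis using a' by blast
qed

lemma facet_hyperplane_unique:
  fixes Q :: "(real^'n) set"
  assumes full: "aff_dim Q = int CARD('n)" and F: "F facet_of Q"
    and a: "a \<noteq> 0" and a': "a' \<noteq> 0"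
    and v: "Q \<subseteq> {x. b \<le> a \<bullet> x}" and v': "Q \<subseteq> {x. b' \<le> a' \<bullet> x}"
    and Fe: "F = {x\<in>Q. a \<bullet> x = b}" and Fe': "F = {x\<in>Q. a' \<bullet> x = b'}"
  shows "\<exists>\<mu>>0. a' = \<mu> *\<^sub>R a \<and> b' = \<mu> * b"
proof -
  have dF: "aff_dim F = int CARD('n) - 1" using F full by (simp add: facet_of_def)
  have ah: "affine hull F = {x. c \<bullet> x = d}" if c: "c \<noteq> 0" and sub: "F \<subseteq> {x. c \<bullet> x = d}" for c d
  proof -
    have "aff_dim {x. c \<bullet> x = d} = int CARD('n) - 1" using c by simp
    then have "aff_dim F = aff_dim {x. c \<bullet> x = d}" using dF by simp
    then have "affine hull F = affine hull {x. c \<bullet> x = d}"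
      by (rule aff_dim_eq_full_gen[OF sub, THEN iffD1])
    also have "\<dots> = {x. c \<bullet> x = d}" by (rule affine_hull_eq[THEN iffD2, OF affine_hyperplane])
    finally show ?thesis .
  qed
  have h1: "affine hull F = {x. a \<bullet> x = b}" by (rule ah[OF a]) (use Fe in blast)
  have h2: "affine hull F = {x. a' \<bullet> x = b'}" by (rule ah[OF a']) (use Fe' in blast)
  have "{x. a \<bullet> x = b} = {x. a' \<bullet> x = b'}" by (rule trans[OF sym[OF h1] h2])
  then obtain \<mu> where mu: "a' = \<mu> *\<^sub>R a" "b' = \<mu> * b" using hyp_eq[OF a, of b a' b'] by blast
  have "\<not> Q \<subseteq> {x. a \<bullet> x = b}"
  proof
    assume "Q \<subseteq> {x. a \<bullet> x = b}"
    then have "aff_dim Q \<le> aff_dim {x. a \<bullet> x = b}" by (rule aff_dim_subset)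
    then show False using full a by simp
  qed
  then obtain x where x: "x \<in> Q" "a \<bullet> x \<noteq> b" by blast
  then have gt: "a \<bullet> x > b" using v by force
  have "b' \<le> a' \<bullet> x" using v' x by blast
  then have "\<mu> * b \<le> \<mu> * (a \<bullet> x)" using mu by simp
  then have "\<mu> \<ge> 0" using gt by (smt (verit) mult_le_cancel_left)
  moreover have "\<mu> \<noteq> 0" using mu a' by auto
  ultimately have "\<mu> > 0" by simp
  then show ?thesis using mu by blast
qed

definition na :: "(real^'n) set \<Rightarrow> (real^'n) set \<Rightarrow> real^'n" where
  "na Q F = fst (THE (a, b). facet_ineq Q F a b)"
definition nb :: "(real^'n) set \<Rightarrow> (real^'n) set \<Rightarrow> real" where
  "nb Q F = snd (THE (a, b). facet_ineq Q F a b)"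

lemma facet_dist_na: "facet_dist Q F x = na Q F \<bullet> x - nb Q F"
  unfolding facet_dist_def na_def nb_def by (simp add: split_beta Let_def)

lemma facet_ineq_unique:
  fixes Q :: "(real^'n) set"
  assumes full: "aff_dim Q = int CARD('n)" and F: "F facet_of Q"
    and fi: "facet_ineq Q F a b" and fi': "facet_ineq Q F a' b'"
  shows "a' = a \<and> b' = b"
proof -
  have pa: "primitive_vec a" and pa': "primitive_vec a'" using fi fi' by (auto simp: facet_ineq_def)
  then have "a \<noteq> 0" "a' \<noteq> 0" by (auto simp: primitive_vec_def)
  then obtain \<mu> where mu: "\<mu> > 0" "a' = \<mu> *\<^sub>R a" "b' = \<mu> * b"
  proof -
    have u: "(\<forall>x\<in>Q. b \<le> a \<bullet> x)" "F = {x\<in>Q. a \<bullet> x = b}" using fi unfolding facet_ineq_def by simp_all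
    have u': "(\<forall>x\<in>Q. b' \<le> a' \<bullet> x)" "F = {x\<in>Q. a' \<bullet> x = b'}" using fi' unfolding facet_ineq_def by simp_all
    have v: "Q \<subseteq> {x. b \<le> a \<bullet> x}" "F = {x\<in>Q. a \<bullet> x = b}" using u by blast+
    have v': "Q \<subseteq> {x. b' \<le> a' \<bullet> x}" "F = {x\<in>Q. a' \<bullet> x = b'}" using u' by blast+
    show ?thesis using facet_hyperplane_unique[OF full F \<open>a \<noteq> 0\<close> \<open>a' \<noteq> 0\<close> v(1) v'(1) v(2) v'(2)] that by blast
  qed
  have "primitive_vec (\<mu> *\<^sub>R a)" using pa' mu(2) by simp
  then have "\<mu> = 1" using primitive_unique_scale[OF pa _ mu(1)] by simp
  then show ?thesis using mu by simp
qed

lemma facet_ineq_na: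
  fixes Q :: "(real^'n) set"
  assumes full: "aff_dim Q = int CARD('n)" and F: "F facet_of Q"
    and fi: "facet_ineq Q F a b"
  shows "na Q F = a" "nb Q F = b"
proof -
  have "(THE (a, b). facet_ineq Q F a b) = (a, b)"
  proof (rule the_equality)
    show "case (a, b) of (a, b) \<Rightarrow> facet_ineq Q F a b" using fi by simp
    fix p assume "case p of (a, b) \<Rightarrow> facet_ineq Q F a b"
    then have "facet_ineq Q F (fst p) (snd p)" by (simp add: split_beta)
    then have "fst p = a \<and> snd p = b" by (rule facet_ineq_unique[OF full F fi])
    then show "p = (a, b)" by (simp add: prod_eq_iff)
  qed
  then show "na Q F = a" "nb Q F = b" unfolding na_def nb_def by auto
qed




lemma facet_affine_hull:
  fixes Q :: "(real^'n) set"
  assumes full: "aff_dim Q = int CARD('n)" and F: "F facet_of Q"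
    and c: "c \<noteq> 0" and sub: "F \<subseteq> {x. c \<bullet> x = d}"
  shows "affine hull F = {x. c \<bullet> x = d}"
proof -
  have dF: "aff_dim F = int CARD('n) - 1" using F full by (simp add: facet_of_def)
  have "aff_dim {x. c \<bullet> x = d} = int CARD('n) - 1" using c by simp
  then have "aff_dim F = aff_dim {x. c \<bullet> x = d}" using dF by simp
  then have "affine hull F = affine hull {x. c \<bullet> x = d}"
    by (rule aff_dim_eq_full_gen[OF sub, THEN iffD1])
  also have "\<dots> = {x. c \<bullet> x = d}" by (rule affine_hull_eq[THEN iffD2, OF affine_hyperplane])
  finally show ?thesis .
qed

lemma Ints_minus_iff': "(- x :: real) \<in> \<int> \<longleftrightarrow> x \<in> \<int>"
  by (metis Ints_minus minus_minus)

lemma primitive_neg: "primitive_vec (- a) \<longleftrightarrow> primitive_vec (a::real^'n)"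
  unfolding primitive_vec_def by (simp add: Ints_minus_iff' minus_divide_left[symmetric])

lemma rat_facet_ineq:
  fixes P :: "(real^'n) set"
  assumes rat: "rational_polytope P" and full: "aff_dim P = int CARD('n)" and F: "F facet_of P"
  shows "\<exists>a b. facet_ineq P F a b"
proof -
  obtain V where V: "finite V" "P = convex hull V" "\<forall>v\<in>V. \<forall>i. v $ i \<in> \<rat>"
    using rat unfolding rational_polytope_def by blast
  have "polytope P" unfolding polytope_def using V by blast
  then have "polyhedron P" by (rule polytope_imp_polyhedron)
  then obtain a b where ab: "a \<noteq> 0" "P \<subseteq> {x. a \<bullet> x \<le> b}" "F = P \<inter> {x. a \<bullet> x = b}"
    using F facet_of_polyhedron by metis
  have "F face_of convex hull V" using F V by (simp add: facet_of_def)
  then obtain T where T: "T \<subseteq> V" "F = convex hull T"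
    using face_of_convex_hull_subset[OF finite_imp_compact[OF V(1)]] by blast
  have finT: "finite T" using T V finite_subset by blast
  have ratT: "\<forall>v\<in>T. \<forall>i. v $ i \<in> \<rat>" using T V by blast
  have "aff_dim T = aff_dim F" using T by (simp add: aff_dim_convex_hull)
  then have dT: "aff_dim T = int CARD('n) - 1" using F full by (simp add: facet_of_def)
  have "F \<noteq> {}" using F by (simp add: facet_of_def)
  then obtain w0 where w0: "w0 \<in> T" using T by auto
  obtain c where c: "c \<noteq> 0" "\<forall>i. c$i \<in> \<rat>" "\<forall>w\<in>T. c \<bullet> (w - w0) = 0"
    using rat_normal[OF finT ratT dT w0] by blast
  have "T \<subseteq> {x. c \<bullet> x = c \<bullet> w0}" using c(3) by (auto simp: inner_diff_right)
  then have Fsub: "F \<subseteq> {x. c \<bullet> x = c \<bullet> w0}" unfolding T(2)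
    by (rule hull_minimal) (rule convex_hyperplane)
  have "affine hull F = {x. c \<bullet> x = c \<bullet> w0}" by (rule facet_affine_hull[OF full F c(1) Fsub])
  moreover have "affine hull F = {x. a \<bullet> x = b}" by (rule facet_affine_hull[OF full F ab(1)]) (use ab(3) in blast)
  ultimately have "{x. a \<bullet> x = b} = {x. c \<bullet> x = c \<bullet> w0}" by simp
  then obtain lm where lam: "c = lm *\<^sub>R a" "c \<bullet> w0 = lm * b" using hyp_eq[OF ab(1), of b c "c \<bullet> w0"] by blast
  obtain \<mu> where mu: "\<mu> > 0" "primitive_vec (\<mu> *\<^sub>R c)" using primitive_scaling[OF c(1,2)] by blast
  define \<kappa> where "\<kappa> = \<mu> * lm"
  have "lm \<noteq> 0" using lam c(1) by auto
  then have kap: "\<kappa> \<noteq> 0" using mu unfolding \<kappa>_def by simp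
  have pk: "primitive_vec (\<kappa> *\<^sub>R a)" using mu lam unfolding \<kappa>_def by simp
  have prim: "primitive_vec ((- \<bar>\<kappa>\<bar>) *\<^sub>R a)"
  proof (cases "\<kappa> < 0")
    case True then show ?thesis using pk by simp
  next
    case False then have "(- \<bar>\<kappa>\<bar>) *\<^sub>R a = - (\<kappa> *\<^sub>R a)" by simp
    then show ?thesis using pk primitive_neg by metis
  qed
  have "facet_ineq P F ((- \<bar>\<kappa>\<bar>) *\<^sub>R a) (- \<bar>\<kappa>\<bar> * b)"
    unfolding facet_ineq_def
  proof (intro conjI ballI)
    show "primitive_vec ((- \<bar>\<kappa>\<bar>) *\<^sub>R a)" by (rule prim)
    fix x assume "x \<in> P"
    then have "a \<bullet> x \<le> b" using ab by blast
    then show "- \<bar>\<kappa>\<bar> * b \<le> (- \<bar>\<kappa>\<bar>) *\<^sub>R a \<bullet> x"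
      by (simp add: mult_left_mono)
  next
    show "F = {x \<in> P. (- \<bar>\<kappa>\<bar>) *\<^sub>R a \<bullet> x = - \<bar>\<kappa>\<bar> * b}"
      using ab(3) kap by auto
  qed
  then show ?thesis by blast
qed

lemma outside_full_polyhedron:
  fixes S :: "(real^'n) set"
  assumes "polyhedron S" and full: "aff_dim S = int CARD('n)" and x: "x \<notin> S"
  shows "\<exists>C a b. C facet_of S \<and> a \<noteq> 0 \<and> S \<subseteq> {y. a \<bullet> y \<le> b} \<and> C = S \<inter> {y. a \<bullet> y = b} \<and> b < a \<bullet> x"
proof -
  obtain Fam where "finite Fam" and seq: "S = affine hull S \<inter> \<Inter>Fam"
             and faces: "\<And>h. h \<in> Fam \<Longrightarrow> \<exists>a b. a \<noteq> 0 \<and> h = {x. a \<bullet> x \<le> b}"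
             and min: "\<And>F'. F' \<subset> Fam \<Longrightarrow> S \<subset> (affine hull S) \<inter> \<Inter>F'"
    using assms by (simp add: polyhedron_Int_affine_minimal) meson
  then obtain a b where ab: "\<And>h. h \<in> Fam \<Longrightarrow> a h \<noteq> 0 \<and> h = {x. a h \<bullet> x \<le> b h}"
    by metis
  have "affine hull S = UNIV" using full aff_dim_eq_full[of S] by simp
  then have "x \<notin> \<Inter>Fam" using x seq by blast
  then obtain h where h: "h \<in> Fam" "x \<notin> h" by blast
  have C: "(S \<inter> {y. a h \<bullet> y = b h}) facet_of S"
    using facet_of_polyhedron_explicit[OF \<open>finite Fam\<close> seq ab min] h by blast
  have "S \<subseteq> h" using seq h by blast
  then have "S \<subseteq> {y. a h \<bullet> y \<le> b h}" using ab h by blast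
  moreover have "b h < a h \<bullet> x" using ab[OF h(1)] h(2) by auto
  ultimately show ?thesis using C ab[OF h(1)] by blast
qed

lemma facet_from_family:
  fixes S :: "'a::euclidean_space set"
  assumes finK: "finite K" and Seq: "S = \<Inter> ((\<lambda>k. {x. A k \<bullet> x \<le> B k}) ` K)"
    and nz: "\<And>k. k \<in> K \<Longrightarrow> A k \<noteq> 0" and C: "C facet_of S"
  shows "\<exists>k\<in>K. C = S \<inter> {x. A k \<bullet> x = B k}"
proof -
  define H where "H k = {x. A k \<bullet> x \<le> B k}" for k
  define Fam where "Fam = H ` K"
  define Pr where "Pr G = (G \<subseteq> Fam \<and> S = affine hull S \<inter> \<Inter>G)" for G
  have "Pr Fam" unfolding Pr_def Fam_def H_def using Seq hull_subset[of S affine] by blast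
  then obtain Fm where Fm: "Pr Fm" and least: "\<And>G. Pr G \<Longrightarrow> card Fm \<le> card G"
    using ex_has_least_nat[of Pr Fam card] by blast
  have finFam: "finite Fam" unfolding Fam_def using finK by simp
  have finFm: "finite Fm" using Fm finFam unfolding Pr_def by (blast intro: finite_subset)
  have seq: "S = affine hull S \<inter> \<Inter>Fm" using Fm unfolding Pr_def by blast
  have psub: "S \<subset> affine hull S \<inter> \<Inter>F'" if "F' \<subset> Fm" for F'
  proof -
    have "S \<subseteq> affine hull S \<inter> \<Inter>F'" using seq that by blast
    moreover have "S \<noteq> affine hull S \<inter> \<Inter>F'"
    proof
      assume "S = affine hull S \<inter> \<Inter>F'"
      then have "Pr F'" using that Fm unfolding Pr_def by blast
      then have "card Fm \<le> card F'" by (rule least)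
      moreover have "card F' < card Fm" using that finFm by (rule psubset_card_mono[rotated])
      ultimately show False by simp
    qed
    ultimately show ?thesis by blast
  qed
  define kk where "kk h = (SOME k. k \<in> K \<and> h = H k)" for h
  have kk: "kk h \<in> K \<and> h = H (kk h)" if "h \<in> Fm" for h
  proof -
    have "h \<in> Fam" using that Fm unfolding Pr_def by blast
    then have "\<exists>k. k \<in> K \<and> h = H k" unfolding Fam_def by blast
    then show ?thesis unfolding kk_def by (rule someI_ex)
  qed
  have faceq: "A (kk h) \<noteq> 0 \<and> h = {x. A (kk h) \<bullet> x \<le> B (kk h)}" if "h \<in> Fm" for h
    using kk[OF that] nz unfolding H_def by blast
  obtain h where h: "h \<in> Fm" "C = S \<inter> {x. A (kk h) \<bullet> x = B (kk h)}"
    using facet_of_polyhedron_explicit[OF finFm seq faceq psub] C by blast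
  then show ?thesis using kk[OF h(1)] by blast
qed

lemma lat_dist_ge_iff:
  assumes "finite {F. F facet_of Q}" "{F. F facet_of Q} \<noteq> {}"
  shows "t \<le> lat_dist Q x \<longleftrightarrow> (\<forall>F. F facet_of Q \<longrightarrow> t \<le> facet_dist Q F x)"
  unfolding lat_dist_def using assms by (subst Min_ge_iff) auto

lemma lat_dist_le:
  assumes "finite {F. F facet_of Q}" "F facet_of Q"
  shows "lat_dist Q x \<le> facet_dist Q F x"
  unfolding lat_dist_def using assms by (intro Min_le) auto

lemma lat_dist_attained:
  assumes "finite {F. F facet_of Q}" "{F. F facet_of Q} \<noteq> {}"
  shows "\<exists>F. F facet_of Q \<and> lat_dist Q x = facet_dist Q F x"
proof -
  have "lat_dist Q x \<in> (\<lambda>F. facet_dist Q F x) ` {F. F facet_of Q}"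
    unfolding lat_dist_def using assms by (intro Min_in) auto
  then show ?thesis by auto
qed



lemma affine_comb_inner:
  "a \<bullet> ((1 - l) *\<^sub>R y + l *\<^sub>R x) - b = (1 - l) * (a \<bullet> y - b) + l * (a \<bullet> x - b)"
  by (simp add: inner_add_right algebra_simps)

locale ratpoly =
  fixes P :: "(real^'n) set"
  assumes rat: "rational_polytope P" and full: "aff_dim P = int CARD('n)"
begin

lemma polytopeP: "polytope P"
  using rat unfolding rational_polytope_def polytope_def by blast

lemma polyhP: "polyhedron P" using polytopeP by (rule polytope_imp_polyhedron)

lemma boundedP: "bounded P" using polytopeP by (rule polytope_imp_bounded)

lemma fi: "F facet_of P \<Longrightarrow> facet_ineq P F (na P F) (nb P F)"
proof -
  assume F: "F facet_of P"
  obtain a b where ab: "facet_ineq P F a b" using rat_facet_ineq[OF rat full F] by blast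
  then show ?thesis using facet_ineq_na[OF full F ab] by simp
qed

lemma na_nz: "F facet_of P \<Longrightarrow> na P F \<noteq> 0"
  using fi by (auto simp: facet_ineq_def primitive_vec_def)

lemma prim: "F facet_of P \<Longrightarrow> primitive_vec (na P F)"
  using fi by (auto simp: facet_ineq_def)

lemma valid: "F facet_of P \<Longrightarrow> x \<in> P \<Longrightarrow> nb P F \<le> na P F \<bullet> x"
  using fi unfolding facet_ineq_def by blast

lemma Feq: "F facet_of P \<Longrightarrow> F = {x\<in>P. na P F \<bullet> x = nb P F}"
  using fi unfolding facet_ineq_def by blast

lemma finI: "finite {F. F facet_of P}"
  using polytopeP by (rule finite_polytope_facets)

lemma neI: "{F. F facet_of P} \<noteq> {}"
proof -
  have "0 < aff_dim P" using full by simp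
  then obtain F where "F facet_of P" using polytope_facet_exists[OF polytopeP] by blast
  then show ?thesis by blast
qed

lemma P_rep: "x \<in> P \<longleftrightarrow> (\<forall>F. F facet_of P \<longrightarrow> nb P F \<le> na P F \<bullet> x)"
proof
  assume "x \<in> P" then show "\<forall>F. F facet_of P \<longrightarrow> nb P F \<le> na P F \<bullet> x" using valid by blast
next
  assume all: "\<forall>F. F facet_of P \<longrightarrow> nb P F \<le> na P F \<bullet> x"
  show "x \<in> P"
  proof (rule ccontr)
    assume "x \<notin> P"
    then obtain C a b where C: "C facet_of P" "a \<noteq> 0" "P \<subseteq> {y. a \<bullet> y \<le> b}"
      "C = P \<inter> {y. a \<bullet> y = b}" "b < a \<bullet> x"
      using outside_full_polyhedron[OF polyhP full] by blast
    have v1: "P \<subseteq> {y. - b \<le> (- a) \<bullet> y}" using C(3) by auto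
    have v2: "P \<subseteq> {y. nb P C \<le> na P C \<bullet> y}" using valid[OF C(1)] by blast
    have e1: "C = {y\<in>P. (- a) \<bullet> y = - b}" using C(4) by auto
    have e2: "C = {y\<in>P. na P C \<bullet> y = nb P C}" using Feq[OF C(1)] .
    obtain \<mu> where mu: "\<mu> > 0" "na P C = \<mu> *\<^sub>R (- a)" "nb P C = \<mu> * (- b)"
      using facet_hyperplane_unique[OF full C(1) _ na_nz[OF C(1)] v1 v2 e1 e2] C(2) by auto
    have "nb P C \<le> na P C \<bullet> x" using all C(1) by blast
    then have "\<mu> * (a \<bullet> x) \<le> \<mu> * b" using mu by simp
    then have "a \<bullet> x \<le> b" using mu(1) by simp
    then show False using C(5) by simp
  qed
qed

lemma adj_iff: "x \<in> adjoint_poly P s \<longleftrightarrow> (\<forall>F. F facet_of P \<longrightarrow> s \<le> na P F \<bullet> x - nb P F)"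
  unfolding adjoint_poly_def using lat_dist_ge_iff[OF finI neI] by (simp add: facet_dist_na)

lemma adj0: "adjoint_poly P 0 = P"
  using adj_iff P_rep by auto

lemma adj_sub: "0 \<le> s \<Longrightarrow> adjoint_poly P s \<subseteq> P"
  using adj_iff P_rep by force

lemma adj_bounded: "0 \<le> s \<Longrightarrow> bounded (adjoint_poly P s)"
  using adj_sub boundedP bounded_subset by blast

lemma adj_Inter: "adjoint_poly P s = \<Inter> ((\<lambda>F. {x. (- na P F) \<bullet> x \<le> - (nb P F + s)}) ` {F. F facet_of P})"
proof -
  have le_neg: "(s \<le> t - b) = (- t \<le> - b - s)" for t b :: real by arith
  show ?thesis unfolding set_eq_iff adj_iff by (auto simp: le_neg)
qed

lemma adj_polyh: "polyhedron (adjoint_poly P s)"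
proof -
  have h: "polyhedron {x. (- na P F) \<bullet> x \<le> - (nb P F + s)}" for F by (rule polyhedron_halfspace_le)
  show ?thesis unfolding adj_Inter
    by (rule polyhedron_Inter) (use finI h in blast)+
qed

lemma adj_facet_eq: "adj_facet P F s = {x \<in> adjoint_poly P s. na P F \<bullet> x = nb P F + s}"
  unfolding adj_facet_def facet_dist_na by auto

lemma adj_facet0: "F facet_of P \<Longrightarrow> adj_facet P F 0 = F"
  unfolding adj_facet_eq adj0 using Feq by auto

lemma part1: "G facet_of adjoint_poly P s \<Longrightarrow> \<exists>F. F facet_of P \<and> G = adj_facet P F s"
proof -
  assume G: "G facet_of adjoint_poly P s"
  obtain F where F: "F \<in> {F. F facet_of P}"
    "G = adjoint_poly P s \<inter> {x. (- na P F) \<bullet> x = - (nb P F + s)}"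
    using facet_from_family[OF finI adj_Inter _ G] na_nz by auto
  then have "G = adj_facet P F s" unfolding adj_facet_eq by auto
  then show ?thesis using F by blast
qed

lemma latP_le: "F facet_of P \<Longrightarrow> lat_dist P x \<le> na P F \<bullet> x - nb P F"
  using lat_dist_le[OF finI] by (simp add: facet_dist_na)

lemma latP_att: "\<exists>F. F facet_of P \<and> lat_dist P x = na P F \<bullet> x - nb P F"
  using lat_dist_attained[OF finI neI] by (simp add: facet_dist_na)

end



locale ratpoly_s = ratpoly P for P :: "(real^'n) set" +
  fixes s :: real
  assumes spos: "0 < s" and fullS: "aff_dim (adjoint_poly P s) = int CARD('n)"
begin

abbreviation "Q \<equiv> adjoint_poly P s"

definition J where "J = {F. F facet_of P \<and> adj_facet P F s facet_of Q}"

lemma adjD: "x \<in> adjoint_poly P t \<Longrightarrow> F facet_of P \<Longrightarrow> t \<le> na P F \<bullet> x - nb P F"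
  using adj_iff by blast

lemma J_sub: "F \<in> J \<Longrightarrow> F facet_of P" unfolding J_def by blast

lemma finJ: "finite J" using finI unfolding J_def by (rule finite_subset[rotated]) blast

lemma fiQ: "F \<in> J \<Longrightarrow> facet_ineq Q (adj_facet P F s) (na P F) (nb P F + s)"
  unfolding facet_ineq_def
proof (intro conjI ballI)
  assume F: "F \<in> J"
  show "primitive_vec (na P F)" using prim[OF J_sub[OF F]] .
  fix x assume "x \<in> Q"
  then have "s \<le> na P F \<bullet> x - nb P F" using adjD J_sub[OF F] by blast
  then show "nb P F + s \<le> na P F \<bullet> x" by simp
next
  show "adj_facet P F s = {x \<in> Q. na P F \<bullet> x = nb P F + s}" by (rule adj_facet_eq)
qed

lemma naQ: "F \<in> J \<Longrightarrow> na Q (adj_facet P F s) = na P F \<and> nb Q (adj_facet P F s) = nb P F + s"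
  using facet_ineq_na[OF fullS _ fiQ] unfolding J_def by blast

lemma facetsQ: "{G. G facet_of Q} = (\<lambda>F. adj_facet P F s) ` J"
  using part1 unfolding J_def by auto

lemma Q_rep: "x \<in> Q \<longleftrightarrow> (\<forall>F\<in>J. s \<le> na P F \<bullet> x - nb P F)"
proof
  assume "x \<in> Q" then show "\<forall>F\<in>J. s \<le> na P F \<bullet> x - nb P F" using adj_iff J_sub by blast
next
  assume all: "\<forall>F\<in>J. s \<le> na P F \<bullet> x - nb P F"
  show "x \<in> Q"
  proof (rule ccontr)
    assume "x \<notin> Q"
    then obtain C a b where C: "C facet_of Q" "a \<noteq> 0" "Q \<subseteq> {y. a \<bullet> y \<le> b}"
      "C = Q \<inter> {y. a \<bullet> y = b}" "b < a \<bullet> x"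
      using outside_full_polyhedron[OF adj_polyh fullS] by blast
    obtain F where F: "F facet_of P" "C = adj_facet P F s" using part1[OF C(1)] by blast
    then have FJ: "F \<in> J" using C(1) unfolding J_def by blast
    have v1: "Q \<subseteq> {y. - b \<le> (- a) \<bullet> y}" using C(3) by auto
    have v2: "Q \<subseteq> {y. nb P F + s \<le> na P F \<bullet> y}"
    proof
      fix y assume "y \<in> Q"
      then have "s \<le> na P F \<bullet> y - nb P F" using adjD F(1) by blast
      then show "y \<in> {y. nb P F + s \<le> na P F \<bullet> y}" by simp
    qed
    have e1: "C = {y\<in>Q. (- a) \<bullet> y = - b}" using C(4) by auto
    have e2: "C = {y\<in>Q. na P F \<bullet> y = nb P F + s}" using F(2) adj_facet_eq by simp
    obtain \<mu> where mu: "\<mu> > 0" "na P F = \<mu> *\<^sub>R (- a)" "nb P F + s = \<mu> * (- b)"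
      using facet_hyperplane_unique[OF fullS C(1) _ na_nz[OF F(1)] v1 v2 e1 e2] C(2) by auto
    have "s \<le> na P F \<bullet> x - nb P F" using all FJ by blast
    then have "nb P F + s \<le> na P F \<bullet> x" by simp
    then have "\<mu> * (a \<bullet> x) \<le> \<mu> * b" using mu by simp
    then have "a \<bullet> x \<le> b" using mu(1) by simp
    then show False using C(5) by simp
  qed
qed

lemma J_ne: "J \<noteq> {}"
proof
  assume "J = {}"
  then have "Q = UNIV" using Q_rep by auto
  then show False using adj_bounded[of s] spos not_bounded_UNIV by auto
qed

lemma finQ: "finite {G. G facet_of Q}" unfolding facetsQ using finJ by simp
lemma neQ: "{G. G facet_of Q} \<noteq> {}" unfolding facetsQ using J_ne by simp

lemma fdQ: "F \<in> J \<Longrightarrow> facet_dist Q (adj_facet P F s) x = na P F \<bullet> x - nb P F - s"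
  using naQ by (simp add: facet_dist_na)

lemma latQ_ge_iff: "t \<le> lat_dist Q x \<longleftrightarrow> (\<forall>F\<in>J. t \<le> na P F \<bullet> x - nb P F - s)"
proof -
  have iff: "G facet_of Q \<longleftrightarrow> (\<exists>F\<in>J. G = adj_facet P F s)" for G
    using facetsQ by blast
  have "(\<forall>G. G facet_of Q \<longrightarrow> t \<le> facet_dist Q G x) \<longleftrightarrow> (\<forall>F\<in>J. t \<le> facet_dist Q (adj_facet P F s) x)"
    unfolding iff by blast
  also have "\<dots> \<longleftrightarrow> (\<forall>F\<in>J. t \<le> na P F \<bullet> x - nb P F - s)" using fdQ by simp
  finally show ?thesis unfolding lat_dist_ge_iff[OF finQ neQ] .
qed

lemma latQ_le: "F \<in> J \<Longrightarrow> lat_dist Q x \<le> na P F \<bullet> x - nb P F - s"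
  using latQ_ge_iff[of "lat_dist Q x" x] by auto

lemma latQ_att: "\<exists>F\<in>J. lat_dist Q x = na P F \<bullet> x - nb P F - s"
proof -
  obtain G where G: "G facet_of Q" "lat_dist Q x = facet_dist Q G x"
    using lat_dist_attained[OF finQ neQ] by blast
  then obtain F where "F \<in> J" "G = adj_facet P F s" using facetsQ by blast
  then show ?thesis using G fdQ by auto
qed

lemma L1:
  assumes x: "x \<in> Q" and G: "G facet_of P"
  shows "\<exists>F\<in>J. na P F \<bullet> x - nb P F \<le> na P G \<bullet> x - nb P G"
proof (rule ccontr)
  assume "\<not> ?thesis"
  then have lt: "\<forall>F\<in>J. na P G \<bullet> x - nb P G < na P F \<bullet> x - nb P F" by auto
  define u where "u = na P G \<bullet> x - nb P G"
  define t where "t = Min ((\<lambda>F. na P F \<bullet> x - nb P F) ` J)"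
  have tin: "t \<in> (\<lambda>F. na P F \<bullet> x - nb P F) ` J" unfolding t_def using finJ J_ne by (intro Min_in) auto
  then have ut: "u < t" using lt unfolding u_def by auto
  have tle: "t \<le> na P F \<bullet> x - nb P F" if "F \<in> J" for F
    unfolding t_def using finJ that by (intro Min_le) auto
  have us: "s \<le> u" using x G adj_iff unfolding u_def by blast
  then have tpos: "t > 0" using ut spos by linarith
  have "G \<noteq> {}" using G by (simp add: facet_of_def)
  then obtain y where y: "y \<in> G" by blast
  have yP: "y \<in> P" using y G facet_of_imp_subset by blast
  have "y \<in> {x\<in>P. na P G \<bullet> x = nb P G}" using Feq[OF G] y by blast
  then have dGy: "na P G \<bullet> y - nb P G = 0" by simp
  define l where "l = s / t"
  have l0: "0 \<le> l" "l \<le> 1" unfolding l_def using spos tpos us ut by (auto simp: divide_simps)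
  define z where "z = (1 - l) *\<^sub>R y + l *\<^sub>R x"
  have "z \<in> Q" unfolding Q_rep
  proof
    fix F assume F: "F \<in> J"
    have "0 \<le> na P F \<bullet> y - nb P F" using valid[OF J_sub[OF F] yP] by simp
    then have "0 \<le> (1 - l) * (na P F \<bullet> y - nb P F)" using l0 by simp
    moreover have "l * t \<le> l * (na P F \<bullet> x - nb P F)" using tle[OF F] l0 by (simp add: mult_left_mono)
    moreover have "l * t = s" unfolding l_def using tpos by simp
    ultimately show "s \<le> na P F \<bullet> z - nb P F" unfolding z_def affine_comb_inner by linarith
  qed
  then have "s \<le> na P G \<bullet> z - nb P G" using adj_iff G by blast
  also have "na P G \<bullet> z - nb P G = l * u" unfolding z_def affine_comb_inner dGy u_def by simp
  also have "l * u < s" unfolding l_def using ut tpos spos by (simp add: divide_simps)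
  finally show False by simp
qed

lemma interior_strict:
  assumes x: "x \<in> interior Q" and F: "F facet_of P"
  shows "s < na P F \<bullet> x - nb P F"
proof -
  obtain e where e: "e > 0" "ball x e \<subseteq> Q" using x mem_interior by blast
  define a where "a = na P F"
  have a: "a \<noteq> 0" unfolding a_def using na_nz[OF F] .
  define z where "z = x - ((e / 2) / norm a) *\<^sub>R a"
  have "dist x z = e / 2" unfolding z_def dist_norm using a e by simp
  then have "z \<in> Q" using e by auto
  then have "s \<le> a \<bullet> z - nb P F" using adj_iff F unfolding a_def by blast
  also have "a \<bullet> z = a \<bullet> x - (e / 2) * norm a"
    unfolding z_def using a by (simp add: inner_diff_right dot_square_norm power2_eq_square)
  finally have "s + (e / 2) * norm a \<le> a \<bullet> x - nb P F" by simp
  moreover have "0 < (e / 2) * norm a" using a e by simp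
  ultimately show ?thesis unfolding a_def by linarith
qed

lemma facets_eq_of_subset:
  assumes F: "F facet_of P" and G: "G facet_of P" and sub: "G \<subseteq> F"
  shows "G = F"
proof (rule ccontr)
  assume ne: "G \<noteq> F"
  have "G face_of F" using face_of_subset[OF facet_of_imp_face_of[OF G] sub facet_of_imp_subset[OF F]] .
  moreover have "convex F" using F face_of_imp_convex facet_of_imp_face_of by blast
  ultimately have "aff_dim G < aff_dim F" using ne face_of_aff_dim_lt by blast
  then show False using F G by (simp add: facet_of_def)
qed

lemma L2:
  assumes x: "x \<in> interior Q" and G: "G facet_of P" and GJ: "G \<notin> J"
  shows "\<exists>F\<in>J. na P F \<bullet> x - nb P F < na P G \<bullet> x - nb P G"
proof (rule ccontr)
  assume "\<not> ?thesis"
  then have le: "\<forall>F\<in>J. na P G \<bullet> x - nb P G \<le> na P F \<bullet> x - nb P F" by auto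
  define u where "u = na P G \<bullet> x - nb P G"
  have us: "s < u" unfolding u_def by (rule interior_strict[OF x G])
  then have upos: "u > 0" using spos by linarith
  have cG: "convex G" using G face_of_imp_convex facet_of_imp_face_of by blast
  have "G \<noteq> {}" using G by (simp add: facet_of_def)
  then have "rel_interior G \<noteq> {}" using cG rel_interior_eq_empty by blast
  then obtain y where y: "y \<in> rel_interior G" by blast
  have yG: "y \<in> G" using y rel_interior_subset by blast
  have yP: "y \<in> P" using yG G facet_of_imp_subset by blast
  have "y \<in> {x\<in>P. na P G \<bullet> x = nb P G}" using Feq[OF G] yG by blast
  then have dGy: "na P G \<bullet> y - nb P G = 0" by simp
  have pos: "0 < na P F \<bullet> y - nb P F" if F: "F \<in> J" for F
  proof -
    have FP: "F facet_of P" using J_sub[OF F] .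
    have ge: "0 \<le> na P F \<bullet> y - nb P F" using valid[OF FP yP] by simp
    have "na P F \<bullet> y - nb P F \<noteq> 0"
    proof
      assume "na P F \<bullet> y - nb P F = 0"
      then have yF: "y \<in> F" using Feq[OF FP] yP by auto
      have "(F \<inter> G) face_of P" using facet_of_imp_face_of[OF FP] facet_of_imp_face_of[OF G] face_of_Int by blast
      then have fg: "(F \<inter> G) face_of G" using face_of_subset facet_of_imp_subset[OF G] by blast
      have "F \<inter> G = G"
      proof (rule ccontr)
        assume "F \<inter> G \<noteq> G"
        then have "(F \<inter> G) \<inter> rel_interior G = {}" using face_of_disjoint_rel_interior[OF fg] by blast
        then show False using yF yG y by blast
      qed
      then have "G = F" using facets_eq_of_subset[OF FP G] by blast
      then show False using GJ F by simp
    qed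
    then show ?thesis using ge by linarith
  qed
  define ep where "ep = Min ((\<lambda>F. na P F \<bullet> y - nb P F) ` J)"
  have epin: "ep \<in> (\<lambda>F. na P F \<bullet> y - nb P F) ` J" unfolding ep_def using finJ J_ne by (intro Min_in) auto
  then have eppos: "ep > 0" using pos by auto
  have eple: "ep \<le> na P F \<bullet> y - nb P F" if "F \<in> J" for F
    unfolding ep_def using finJ that by (intro Min_le) auto
  define eta where "eta = min s ((u - s) * ep / u) / 2"
  have eta: "0 < eta" "eta \<le> s" "2 * eta \<le> (u - s) * ep / u"
    unfolding eta_def using spos us upos eppos by (auto simp: min_def)
  define l where "l = (s - eta) / u"
  have l0: "0 \<le> l" unfolding l_def using eta upos by simp
  have lu: "l * u = s - eta" unfolding l_def using upos by simp
  have l1: "(u - s) / u \<le> 1 - l" unfolding l_def using upos eta by (simp add: divide_simps)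
  have "(u - s) * ep / u = ((u - s) / u) * ep" by simp
  also have "\<dots> \<le> (1 - l) * ep" by (rule mult_right_mono[OF l1]) (use eppos in simp)
  finally have key0: "(u - s) * ep / u \<le> (1 - l) * ep" .
  have key: "2 * eta \<le> (1 - l) * ep" by (rule order_trans[OF eta(3) key0])
  have "0 < (u - s) / u" using us upos by simp
  then have l1': "0 \<le> 1 - l" using l1 by linarith
  define z where "z = (1 - l) *\<^sub>R y + l *\<^sub>R x"
  have "z \<in> Q" unfolding Q_rep
  proof
    fix F assume F: "F \<in> J"
    have "(1 - l) * ep \<le> (1 - l) * (na P F \<bullet> y - nb P F)" using eple[OF F] l1' by (simp add: mult_left_mono)
    moreover have "l * u \<le> l * (na P F \<bullet> x - nb P F)" using le F l0 unfolding u_def by (simp add: mult_left_mono)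
    ultimately show "s \<le> na P F \<bullet> z - nb P F" unfolding z_def affine_comb_inner using key lu eta by linarith
  qed
  then have "s \<le> na P G \<bullet> z - nb P G" using adj_iff G by blast
  also have "na P G \<bullet> z - nb P G = l * u" unfolding z_def affine_comb_inner dGy u_def by simp
  finally show False using lu eta by linarith
qed

lemma part2a: "x \<in> Q \<Longrightarrow> lat_dist Q x = lat_dist P x - s"
proof -
  assume x: "x \<in> Q"
  obtain F where F: "F \<in> J" "lat_dist Q x = na P F \<bullet> x - nb P F - s" using latQ_att by blast
  have ge: "lat_dist P x - s \<le> lat_dist Q x" using F latP_le[OF J_sub[OF F(1)]] by simp
  obtain G where G: "G facet_of P" "lat_dist P x = na P G \<bullet> x - nb P G" using latP_att by blast
  obtain F' where F': "F' \<in> J" "na P F' \<bullet> x - nb P F' \<le> na P G \<bullet> x - nb P G" using L1[OF x G(1)] by blast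
  have "lat_dist Q x \<le> lat_dist P x - s" using latQ_le[OF F'(1), of x] F'(2) G(2) by simp
  then show ?thesis using ge by simp
qed

lemma part2b:
  assumes x: "x \<in> interior Q" and F: "F facet_of P" and eq: "lat_dist P x = facet_dist P F x"
  shows "adj_facet P F s facet_of Q \<and> lat_dist Q x = facet_dist Q (adj_facet P F s) x"
proof -
  have eq': "lat_dist P x = na P F \<bullet> x - nb P F" using eq by (simp add: facet_dist_na)
  have FJ: "F \<in> J"
  proof (rule ccontr)
    assume "F \<notin> J"
    then obtain F' where F': "F' \<in> J" "na P F' \<bullet> x - nb P F' < na P F \<bullet> x - nb P F"
      using L2[OF x F] by blast
    then show False using latP_le[OF J_sub[OF F'(1)], of x] eq' by simp
  qed
  have "x \<in> Q" using x interior_subset by blast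
  then have "lat_dist Q x = lat_dist P x - s" by (rule part2a)
  then have "lat_dist Q x = facet_dist Q (adj_facet P F s) x" using fdQ[OF FJ] eq' by simp
  then show ?thesis using FJ unfolding J_def by blast
qed

lemma part3: "0 \<le> r \<Longrightarrow> adjoint_poly Q r = adjoint_poly P (s + r)"
proof -
  assume r: "0 \<le> r"
  show ?thesis
  proof (rule set_eqI)
    fix x
    have lhs: "x \<in> adjoint_poly Q r \<longleftrightarrow> (\<forall>F\<in>J. r \<le> na P F \<bullet> x - nb P F - s)"
      unfolding adjoint_poly_def[of Q] using latQ_ge_iff by simp
    show "x \<in> adjoint_poly Q r \<longleftrightarrow> x \<in> adjoint_poly P (s + r)"
    proof
      assume "x \<in> adjoint_poly Q r"
      then have all: "\<forall>F\<in>J. r \<le> na P F \<bullet> x - nb P F - s" using lhs by blast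
      then have xQ: "x \<in> Q" unfolding Q_rep using r by force
      show "x \<in> adjoint_poly P (s + r)" unfolding adj_iff
      proof (intro allI impI)
        fix G assume G: "G facet_of P"
        obtain F where F: "F \<in> J" "na P F \<bullet> x - nb P F \<le> na P G \<bullet> x - nb P G" using L1[OF xQ G] by blast
        then show "s + r \<le> na P G \<bullet> x - nb P G" using all by force
      qed
    next
      assume "x \<in> adjoint_poly P (s + r)"
      then have "\<forall>F. F facet_of P \<longrightarrow> s + r \<le> na P F \<bullet> x - nb P F" using adj_iff by blast
      then show "x \<in> adjoint_poly Q r" using lhs J_sub by force
    qed
  qed
qed

end



context ratpoly
begin

lemma part4:
  assumes r: "r > 0"
  shows "(\<lambda>x. r *\<^sub>R x) ` adjoint_poly P s = adjoint_poly ((\<lambda>x. r *\<^sub>R x) ` P) (r * s)"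
proof -
  define f where "f = (\<lambda>x::real^'n. r *\<^sub>R x)"
  define g where "g = (\<lambda>x::real^'n. (1 / r) *\<^sub>R x)"
  have lin: "linear f" unfolding f_def by (rule linear_scaleR)
  have inj: "inj f" unfolding f_def inj_on_def using r by simp
  have fg: "f (g y) = y" for y unfolding f_def g_def using r by simp
  have gf: "g (f y) = y" for y unfolding f_def g_def using r by simp
  have fac_iff: "(f ` F facet_of f ` P) \<longleftrightarrow> F facet_of P" for F
    unfolding facet_of_def face_of_linear_image[OF lin inj] aff_dim_injective_linear_image[OF lin inj]
    by simp
  have fullR: "aff_dim (f ` P) = int CARD('n)" using full aff_dim_injective_linear_image[OF lin inj] by simp
  have facR: "G facet_of f ` P \<longleftrightarrow> (\<exists>F. F facet_of P \<and> G = f ` F)" for G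
  proof
    assume G: "G facet_of f ` P"
    have "f ` (g ` G) = G" using fg by (simp add: image_image)
    then have "f ` (g ` G) facet_of f ` P" using G by simp
    then show "\<exists>F. F facet_of P \<and> G = f ` F" using fac_iff \<open>f ` (g ` G) = G\<close> by metis
  next
    assume "\<exists>F. F facet_of P \<and> G = f ` F"
    then show "G facet_of f ` P" using fac_iff by blast
  qed
  have fiR: "facet_ineq (f ` P) (f ` F) (na P F) (r * nb P F)" if F: "F facet_of P" for F
    unfolding facet_ineq_def
  proof (intro conjI ballI)
    show "primitive_vec (na P F)" using prim[OF F] .
    fix y assume "y \<in> f ` P"
    then obtain x where x: "x \<in> P" "y = r *\<^sub>R x" unfolding f_def by blast
    have "nb P F \<le> na P F \<bullet> x" using valid[OF F x(1)] .
    then show "r * nb P F \<le> na P F \<bullet> y" using x r by (simp add: mult_left_mono)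
  next
    show "f ` F = {y \<in> f ` P. na P F \<bullet> y = r * nb P F}"
    proof (rule set_eqI)
      fix y
      show "y \<in> f ` F \<longleftrightarrow> y \<in> {y \<in> f ` P. na P F \<bullet> y = r * nb P F}"
      proof
        assume "y \<in> f ` F"
        then obtain x where x: "x \<in> F" "y = r *\<^sub>R x" unfolding f_def by blast
        then have "x \<in> {x\<in>P. na P F \<bullet> x = nb P F}" using Feq[OF F] by blast
        then show "y \<in> {y \<in> f ` P. na P F \<bullet> y = r * nb P F}" using x unfolding f_def by auto
      next
        assume "y \<in> {y \<in> f ` P. na P F \<bullet> y = r * nb P F}"
        then obtain x where x: "x \<in> P" "y = r *\<^sub>R x" "na P F \<bullet> y = r * nb P F" unfolding f_def by blast
        then have "na P F \<bullet> x = nb P F" using r by simp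
        then have "x \<in> F" using Feq[OF F] x(1) by blast
        then show "y \<in> f ` F" using x unfolding f_def by blast
      qed
    qed
  qed
  have fdR: "facet_dist (f ` P) (f ` F) y = na P F \<bullet> y - r * nb P F" if F: "F facet_of P" for F y
  proof -
    have "f ` F facet_of f ` P" using F fac_iff by simp
    then show ?thesis using facet_ineq_na[OF fullR _ fiR[OF F]] by (simp add: facet_dist_na)
  qed
  have finR: "finite {G. G facet_of f ` P}"
    by (rule finite_polytope_facets) (unfold f_def, rule polytope_scaling[OF polytopeP])
  have neR: "{G. G facet_of f ` P} \<noteq> {}"
  proof -
    obtain F where "F facet_of P" using neI by blast
    then have "f ` F facet_of f ` P" using fac_iff by simp
    then show ?thesis by blast
  qed
  have rhs: "y \<in> adjoint_poly (f ` P) (r * s) \<longleftrightarrow> (\<forall>F. F facet_of P \<longrightarrow> r * s \<le> na P F \<bullet> y - r * nb P F)" for y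
  proof -
    have "y \<in> adjoint_poly (f ` P) (r * s) \<longleftrightarrow> (\<forall>G. G facet_of f ` P \<longrightarrow> r * s \<le> facet_dist (f ` P) G y)"
      unfolding adjoint_poly_def using lat_dist_ge_iff[OF finR neR] by simp
    also have "\<dots> \<longleftrightarrow> (\<forall>F. F facet_of P \<longrightarrow> r * s \<le> facet_dist (f ` P) (f ` F) y)"
      unfolding facR by blast
    also have "\<dots> \<longleftrightarrow> (\<forall>F. F facet_of P \<longrightarrow> r * s \<le> na P F \<bullet> y - r * nb P F)"
      using fdR by simp
    finally show ?thesis .
  qed
  have pt: "s \<le> na P F \<bullet> g y - nb P F \<longleftrightarrow> r * s \<le> na P F \<bullet> y - r * nb P F" for F y
  proof -
    have "na P F \<bullet> g y - nb P F = (na P F \<bullet> y - r * nb P F) / r"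
      unfolding g_def using r by (simp add: field_simps)
    then show ?thesis using r by (simp add: le_divide_eq mult.commute)
  qed
  have "f ` adjoint_poly P s = adjoint_poly (f ` P) (r * s)"
  proof (rule set_eqI)
    fix y
    have "y \<in> f ` adjoint_poly P s \<longleftrightarrow> g y \<in> adjoint_poly P s"
    proof
      assume "y \<in> f ` adjoint_poly P s"
      then obtain x where "x \<in> adjoint_poly P s" "y = f x" by blast
      then show "g y \<in> adjoint_poly P s" using gf by simp
    next
      assume "g y \<in> adjoint_poly P s"
      then have "f (g y) \<in> f ` adjoint_poly P s" by blast
      then show "y \<in> f ` adjoint_poly P s" using fg by simp
    qed
    also have "\<dots> \<longleftrightarrow> (\<forall>F. F facet_of P \<longrightarrow> r * s \<le> na P F \<bullet> y - r * nb P F)"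
      unfolding adj_iff pt ..
    also have "\<dots> \<longleftrightarrow> y \<in> adjoint_poly (f ` P) (r * s)" using rhs by simp
    finally show "y \<in> f ` adjoint_poly P s \<longleftrightarrow> y \<in> adjoint_poly (f ` P) (r * s)" .
  qed
  then show ?thesis unfolding f_def .
qed

end

theorem proposition1p4:
  fixes P :: "(real ^ 'n) set" and s :: real
  assumes "rational_polytope P" and "aff_dim P = int CARD('n)" and "s \<ge> 0"
  shows "(\<forall>G. G facet_of adjoint_poly P s \<longrightarrow> (\<exists>F. F facet_of P \<and> G = adj_facet P F s))
     \<and> (aff_dim (adjoint_poly P s) = int CARD('n) \<longrightarrow>
          (\<forall>x\<in>adjoint_poly P s. lat_dist (adjoint_poly P s) x = lat_dist P x - s)
        \<and> (\<forall>x\<in>interior (adjoint_poly P s). \<forall>F. F facet_of P \<and> lat_dist P x = facet_dist P F x \<longrightarrow>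
              adj_facet P F s facet_of adjoint_poly P s
            \<and> lat_dist (adjoint_poly P s) x = facet_dist (adjoint_poly P s) (adj_facet P F s) x))
     \<and> (aff_dim (adjoint_poly P s) = int CARD('n) \<longrightarrow>
          (\<forall>r\<ge>0. adjoint_poly (adjoint_poly P s) r = adjoint_poly P (s + r)))
     \<and> (\<forall>r>0. (\<lambda>x. r *\<^sub>R x) ` adjoint_poly P s = adjoint_poly ((\<lambda>x. r *\<^sub>R x) ` P) (r * s))"
proof -
  interpret ratpoly P using assms(1,2) by unfold_locales
  have p1: "\<forall>G. G facet_of adjoint_poly P s \<longrightarrow> (\<exists>F. F facet_of P \<and> G = adj_facet P F s)"
    using part1 by blast
  have p4: "\<forall>r>0. (\<lambda>x. r *\<^sub>R x) ` adjoint_poly P s = adjoint_poly ((\<lambda>x. r *\<^sub>R x) ` P) (r * s)"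
    using part4 by blast
  have p23: "((\<forall>x\<in>adjoint_poly P s. lat_dist (adjoint_poly P s) x = lat_dist P x - s)
        \<and> (\<forall>x\<in>interior (adjoint_poly P s). \<forall>F. F facet_of P \<and> lat_dist P x = facet_dist P F x \<longrightarrow>
              adj_facet P F s facet_of adjoint_poly P s
            \<and> lat_dist (adjoint_poly P s) x = facet_dist (adjoint_poly P s) (adj_facet P F s) x))
        \<and> (\<forall>r\<ge>0. adjoint_poly (adjoint_poly P s) r = adjoint_poly P (s + r))"
    if fullS: "aff_dim (adjoint_poly P s) = int CARD('n)"
  proof (cases "s = 0")
    case True
    show ?thesis unfolding True adj0 using adj_facet0 by simp
  next
    case False
    then have spos: "0 < s" using assms(3) by simp
    interpret ratpoly_s P s using spos fullS by unfold_locales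
    show ?thesis using part2a part2b part3 by blast
  qed
  show ?thesis using p1 p23 p4 by blast
qed


end
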